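(* Let $\sigma$ be a signature containing $\triangleright$ and let $\mathcal{A}$ be a $\sigma$-algebra that is representable by partial functions and whose atoms are separating. Then $\lhd$ is completely left-distributive over joins: for every $S\subseteq\mathcal{A}$ such that $\bigvee S$ exists and every $a\in\mathcal{A}$, $\bigvee\{a\lhd s : s\in S\}$ exists and equals $a \lhd \bigvee S$.
   Context: Signatures $\sigma$ are sets of operation symbols drawn from: $\triangleright$ (antidomain restriction), $;$ (composition), $\wedge$ (intersection), $\mathrm{upd}$ (update), $\sqcup$ (preferential union), $\mathsf{D}$ (domain), $\mathsf{A}$ (antidomain), interpreted on partial functions as: $f \triangleright g = \{(x,y) \in g : x \notin \mathrm{dom}(f)\}$; $f;g$ = relational composition ($f$ first); $f\wedge g = f\cap g$; $\mathrm{upd}(f,g)(x)$ is $f(x)$ if $f(x)$ defined and $g(x)$ undefined, $g(x)$ if both defined, undefined otherwise; $(f\sqcup g)(x)$ is $f(x)$ if defined, else $g(x)$; $\mathsf{D}(f)$ = identity on $\mathrm{dom}(f)$; $\mathsf{A}(f)$ = identity on the complement of $\mathrm{dom}(f)$ in the base. $\mathcal{A}$ is representable if isomorphic to a $\sigma$-algebra of partial functions with these operations. Define $0 := a\triangleright a$, $a\lhd b := (a\triangleright b)\triangleright b$ (restriction of $b$ to the domain of $a$), $a \le b :\iff a\lhd b = a$. An atom is a minimal nonzero element; atoms are separating if whenever $a\not\le b$ there is an atom $c\le a$ with $c\not\le b$. *)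

theory Defs
  imports Main
begin

datatype sym = AntiRes | Comp | Meet | Upd | Pref | Dom | ADom

section \<open>Abstract algebras (all operations present; only those in the signature matter)\<close>

record 'a alg =
  carrier :: "'a set"
  ares :: "'a \<Rightarrow> 'a \<Rightarrow> 'a"
  comp :: "'a \<Rightarrow> 'a \<Rightarrow> 'a"
  meet :: "'a \<Rightarrow> 'a \<Rightarrow> 'a"
  upd  :: "'a \<Rightarrow> 'a \<Rightarrow> 'a"
  pref :: "'a \<Rightarrow> 'a \<Rightarrow> 'a"
  dom_op :: "'a \<Rightarrow> 'a"
  adom_op :: "'a \<Rightarrow> 'a"

definition sigma_algebra :: "sym set \<Rightarrow> 'a alg \<Rightarrow> bool" where
  "sigma_algebra \<sigma> A \<longleftrightarrow>
     (AntiRes \<in> \<sigma> \<longrightarrow> (\<forall>x\<in>carrier A. \<forall>y\<in>carrier A. ares A x y \<in> carrier A)) \<and>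
     (Comp \<in> \<sigma> \<longrightarrow> (\<forall>x\<in>carrier A. \<forall>y\<in>carrier A. comp A x y \<in> carrier A)) \<and>
     (Meet \<in> \<sigma> \<longrightarrow> (\<forall>x\<in>carrier A. \<forall>y\<in>carrier A. meet A x y \<in> carrier A)) \<and>
     (Upd \<in> \<sigma> \<longrightarrow> (\<forall>x\<in>carrier A. \<forall>y\<in>carrier A. upd A x y \<in> carrier A)) \<and>
     (Pref \<in> \<sigma> \<longrightarrow> (\<forall>x\<in>carrier A. \<forall>y\<in>carrier A. pref A x y \<in> carrier A)) \<and>
     (Dom \<in> \<sigma> \<longrightarrow> (\<forall>x\<in>carrier A. dom_op A x \<in> carrier A)) \<and>
     (ADom \<in> \<sigma> \<longrightarrow> (\<forall>x\<in>carrier A. adom_op A x \<in> carrier A))"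

definition pf_ares :: "('b \<rightharpoonup> 'b) \<Rightarrow> ('b \<rightharpoonup> 'b) \<Rightarrow> ('b \<rightharpoonup> 'b)" where
  "pf_ares f g = (\<lambda>x. if f x = None then g x else None)"

definition pf_comp :: "('b \<rightharpoonup> 'b) \<Rightarrow> ('b \<rightharpoonup> 'b) \<Rightarrow> ('b \<rightharpoonup> 'b)" where
  "pf_comp f g = (\<lambda>x. case f x of None \<Rightarrow> None | Some y \<Rightarrow> g y)"

definition pf_meet :: "('b \<rightharpoonup> 'b) \<Rightarrow> ('b \<rightharpoonup> 'b) \<Rightarrow> ('b \<rightharpoonup> 'b)" where
  "pf_meet f g = (\<lambda>x. if f x = g x then f x else None)"

definition pf_upd :: "('b \<rightharpoonup> 'b) \<Rightarrow> ('b \<rightharpoonup> 'b) \<Rightarrow> ('b \<rightharpoonup> 'b)" where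
  "pf_upd f g = (\<lambda>x. if f x = None then None else (if g x = None then f x else g x))"

definition pf_pref :: "('b \<rightharpoonup> 'b) \<Rightarrow> ('b \<rightharpoonup> 'b) \<Rightarrow> ('b \<rightharpoonup> 'b)" where
  "pf_pref f g = (\<lambda>x. if f x = None then g x else f x)"

definition pf_dom :: "('b \<rightharpoonup> 'b) \<Rightarrow> ('b \<rightharpoonup> 'b)" where
  "pf_dom f = (\<lambda>x. if f x = None then None else Some x)"

definition pf_adom :: "'b set \<Rightarrow> ('b \<rightharpoonup> 'b) \<Rightarrow> ('b \<rightharpoonup> 'b)" where
  "pf_adom X f = (\<lambda>x. if x \<in> X \<and> f x = None then Some x else None)"

definition representation ::
  "sym set \<Rightarrow> 'a alg \<Rightarrow> 'b set \<Rightarrow> ('a \<Rightarrow> ('b \<rightharpoonup> 'b)) \<Rightarrow> bool" where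
  "representation \<sigma> A X h \<longleftrightarrow>
     inj_on h (carrier A) \<and>
     (\<forall>x\<in>carrier A. dom (h x) \<subseteq> X \<and> ran (h x) \<subseteq> X) \<and>
     (AntiRes \<in> \<sigma> \<longrightarrow> (\<forall>x\<in>carrier A. \<forall>y\<in>carrier A. h (ares A x y) = pf_ares (h x) (h y))) \<and>
     (Comp \<in> \<sigma> \<longrightarrow> (\<forall>x\<in>carrier A. \<forall>y\<in>carrier A. h (comp A x y) = pf_comp (h x) (h y))) \<and>
     (Meet \<in> \<sigma> \<longrightarrow> (\<forall>x\<in>carrier A. \<forall>y\<in>carrier A. h (meet A x y) = pf_meet (h x) (h y))) \<and>
     (Upd \<in> \<sigma> \<longrightarrow> (\<forall>x\<in>carrier A. \<forall>y\<in>carrier A. h (upd A x y) = pf_upd (h x) (h y))) \<and>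
     (Pref \<in> \<sigma> \<longrightarrow> (\<forall>x\<in>carrier A. \<forall>y\<in>carrier A. h (pref A x y) = pf_pref (h x) (h y))) \<and>
     (Dom \<in> \<sigma> \<longrightarrow> (\<forall>x\<in>carrier A. h (dom_op A x) = pf_dom (h x))) \<and>
     (ADom \<in> \<sigma> \<longrightarrow> (\<forall>x\<in>carrier A. h (adom_op A x) = pf_adom X (h x)))"

definition representable_on :: "sym set \<Rightarrow> 'a alg \<Rightarrow> 'b itself \<Rightarrow> bool" where
  "representable_on \<sigma> A _ \<longleftrightarrow> (\<exists>(X::'b set) h. representation \<sigma> A X h)"

definition alg_zero_of :: "'a alg \<Rightarrow> 'a \<Rightarrow> 'a" where
  "alg_zero_of A a = ares A a a"

definition lres :: "'a alg \<Rightarrow> 'a \<Rightarrow> 'a \<Rightarrow> 'a" where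
  "lres A a b = ares A (ares A a b) b"

definition leq :: "'a alg \<Rightarrow> 'a \<Rightarrow> 'a \<Rightarrow> bool" where
  "leq A a b \<longleftrightarrow> lres A a b = a"

definition is_atom :: "'a alg \<Rightarrow> 'a \<Rightarrow> bool" where
  "is_atom A c \<longleftrightarrow> c \<in> carrier A \<and> c \<noteq> alg_zero_of A c \<and>
     (\<forall>d\<in>carrier A. leq A d c \<and> d \<noteq> alg_zero_of A d \<longrightarrow> d = c)"

definition atoms_separating :: "'a alg \<Rightarrow> bool" where
  "atoms_separating A \<longleftrightarrow>
     (\<forall>a\<in>carrier A. \<forall>b\<in>carrier A. \<not> leq A a b \<longrightarrow>
        (\<exists>c. is_atom A c \<and> leq A c a \<and> \<not> leq A c b))"

definition is_join :: "'a alg \<Rightarrow> 'a set \<Rightarrow> 'a \<Rightarrow> bool" where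
  "is_join A S j \<longleftrightarrow> j \<in> carrier A \<and> (\<forall>s\<in>S. leq A s j) \<and>
     (\<forall>u\<in>carrier A. (\<forall>s\<in>S. leq A s u) \<longrightarrow> leq A j u)"

end

theory Submission
  imports Defs
begin

theorem lemma5p7:
  fixes \<sigma> :: "sym set" and A :: "'a alg" and S :: "'a set" and j a :: 'a
  assumes "AntiRes \<in> \<sigma>"
    and "sigma_algebra \<sigma> A"
    and "representable_on \<sigma> A TYPE('b)"
    and "atoms_separating A"
    and "S \<subseteq> carrier A"
    and "is_join A S j"
    and "a \<in> carrier A"
  shows "is_join A {lres A a s | s. s \<in> S} (lres A a j)"
proof -
  obtain X and h :: "'a \<Rightarrow> ('b \<rightharpoonup> 'b)" where rep: "representation \<sigma> A X h"
    using assms(3) unfolding representable_on_def by blast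
  have inj: "inj_on h (carrier A)" using rep unfolding representation_def by blast
  have cl: "\<And>x y. x \<in> carrier A \<Longrightarrow> y \<in> carrier A \<Longrightarrow> ares A x y \<in> carrier A"
    using assms(1,2) unfolding sigma_algebra_def by blast
  have ha: "\<And>x y. x \<in> carrier A \<Longrightarrow> y \<in> carrier A \<Longrightarrow> h (ares A x y) = pf_ares (h x) (h y)"
    using assms(1) rep unfolding representation_def by blast
  have lcl: "\<And>x y. x \<in> carrier A \<Longrightarrow> y \<in> carrier A \<Longrightarrow> lres A x y \<in> carrier A"
    unfolding lres_def using cl by blast
  have hl: "\<And>x y z. x \<in> carrier A \<Longrightarrow> y \<in> carrier A \<Longrightarrow>
      h (lres A x y) z = (if h x z = None then None else h y z)"
    unfolding lres_def using cl ha by (simp add: pf_ares_def)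
  have leq_iff: "\<And>x y. x \<in> carrier A \<Longrightarrow> y \<in> carrier A \<Longrightarrow>
      leq A x y \<longleftrightarrow> (\<forall>z. h x z \<noteq> None \<longrightarrow> h y z = h x z)"
  proof -
    fix x y assume xy: "x \<in> carrier A" "y \<in> carrier A"
    have "leq A x y \<longleftrightarrow> h (lres A x y) = h x"
      unfolding leq_def using inj lcl[OF xy] xy(1) inj_on_eq_iff by metis
    also have "\<dots> \<longleftrightarrow> (\<forall>z. h x z \<noteq> None \<longrightarrow> h y z = h x z)"
      using hl[OF xy] by (auto simp: fun_eq_iff split: if_splits)
    finally show "?thesis x y" .
  qed
  have zero: "\<And>d. d \<in> carrier A \<Longrightarrow> d = alg_zero_of A d \<longleftrightarrow> (\<forall>z. h d z = None)"
  proof -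
    fix d assume d: "d \<in> carrier A"
    have "d = alg_zero_of A d \<longleftrightarrow> h d = h (alg_zero_of A d)"
      unfolding alg_zero_of_def using inj cl[OF d d] d inj_on_eq_iff by metis
    then show "?thesis d" unfolding alg_zero_of_def using ha[OF d d]
      by (auto simp: pf_ares_def fun_eq_iff)
  qed
  have jc: "j \<in> carrier A" and sj: "\<And>s. s \<in> S \<Longrightarrow> leq A s j"
    and jl: "\<And>u. u \<in> carrier A \<Longrightarrow> (\<forall>s\<in>S. leq A s u) \<Longrightarrow> leq A j u"
    using assms(6) unfolding is_join_def by blast+
  have ajc: "lres A a j \<in> carrier A" using lcl assms(7) jc by blast
  show ?thesis
    unfolding is_join_def
  proof (intro conjI ballI impI)
    show "lres A a j \<in> carrier A" by (rule ajc)
  next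
    fix t assume "t \<in> {lres A a s |s. s \<in> S}"
    then obtain s where s: "s \<in> S" "t = lres A a s" by blast
    have sc: "s \<in> carrier A" using s assms(5) by blast
    show "leq A t (lres A a j)"
      unfolding s(2) using leq_iff[OF lcl[OF assms(7) sc] ajc] hl[OF assms(7) sc] hl[OF assms(7) jc]
        sj[OF s(1)] leq_iff[OF sc jc] by auto
  next
    fix u assume uc: "u \<in> carrier A" and ub: "\<forall>t\<in>{lres A a s |s. s \<in> S}. leq A t u"
    show "leq A (lres A a j) u"
    proof (rule ccontr)
      assume nl: "\<not> leq A (lres A a j) u"
      then obtain c where c: "is_atom A c" "leq A c (lres A a j)" "\<not> leq A c u"
        using assms(4) ajc uc unfolding atoms_separating_def by blast
      have cc: "c \<in> carrier A" and cnz: "c \<noteq> alg_zero_of A c"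
        and cmin: "\<And>d. d \<in> carrier A \<Longrightarrow> leq A d c \<Longrightarrow> d \<noteq> alg_zero_of A d \<Longrightarrow> d = c"
        using c(1) unfolding is_atom_def by blast+
      have caj: "\<And>z. h c z \<noteq> None \<Longrightarrow> h a z \<noteq> None \<and> h j z = h c z"
        using c(2) leq_iff[OF cc ajc] hl[OF assms(7) jc] by (metis)
      have disj: "\<And>s z. s \<in> S \<Longrightarrow> h c z \<noteq> None \<Longrightarrow> h s z = None"
      proof (rule ccontr)
        fix s z assume s: "s \<in> S" and cz: "h c z \<noteq> None" and szn: "h s z \<noteq> None"
        have sc: "s \<in> carrier A" using s assms(5) by blast
        have sjj: "\<And>w. h s w \<noteq> None \<Longrightarrow> h j w = h s w"
          using sj[OF s] leq_iff[OF sc jc] by blast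
        have d1: "lres A c s \<in> carrier A" using lcl cc sc by blast
        have "leq A (lres A c s) c"
          using leq_iff[OF d1 cc] hl[OF cc sc] sjj caj by (metis)
        moreover have "lres A c s \<noteq> alg_zero_of A (lres A c s)"
          using zero[OF d1] hl[OF cc sc] cz szn by metis
        ultimately have eq: "lres A c s = c" using cmin d1 by blast
        have "leq A c s" using eq unfolding leq_def by simp
        hence cs: "\<And>w. h c w \<noteq> None \<Longrightarrow> h s w = h c w" using leq_iff[OF cc sc] by blast
        have "leq A (lres A a s) u" using ub s by blast
        hence "\<And>w. h (lres A a s) w \<noteq> None \<Longrightarrow> h u w = h (lres A a s) w"
          using leq_iff[OF lcl[OF assms(7) sc] uc] by blast
        hence "\<And>w. h c w \<noteq> None \<Longrightarrow> h u w = h c w"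
          using hl[OF assms(7) sc] cs caj by (metis)
        thus False using c(3) leq_iff[OF cc uc] by blast
      qed
      define j' where "j' = ares A c j"
      have j'c: "j' \<in> carrier A" unfolding j'_def using cl cc jc by blast
      have hj': "\<And>z. h j' z = (if h c z = None then h j z else None)"
        unfolding j'_def using ha[OF cc jc] by (simp add: pf_ares_def)
      have "\<forall>s\<in>S. leq A s j'"
      proof
        fix s assume s: "s \<in> S"
        have sc: "s \<in> carrier A" using s assms(5) by blast
        show "leq A s j'" using leq_iff[OF sc j'c] hj' disj[OF s]
          sj[OF s] leq_iff[OF sc jc] by metis
      qed
      hence "leq A j j'" using jl j'c by blast
      hence jj: "\<And>z. h j z \<noteq> None \<Longrightarrow> h j' z = h j z" using leq_iff[OF jc j'c] by blast
      obtain z where "h c z \<noteq> None" using zero[OF cc] cnz by blast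
      thus False using caj jj hj' by (metis)
    qed
  qed
qed

end
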